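(* There exist absolute constants $c, c_1>0$ such that the following holds. Let $\Phi:\mathbb{R}^d\to\mathbb{R}$, $\Phi(x) = W^{(1)}\,\mathrm{ReLU}(W^{(0)}x + b^{(0)}) + b^{(1)}$, be a random shallow ReLU network of width $N$, where $W^{(0)}\in\mathbb{R}^{N\times d}$ has i.i.d. $\mathcal{N}(0,2/N)$ entries, $W^{(1)}\in\mathbb{R}^{1\times N}$ has i.i.d. $\mathcal{N}(0,1)$ entries, $b^{(0)}_i \sim \mathcal{D}^{(0)}_i$ and $b^{(1)}\sim\mathcal{D}^{(1)}_1$ for arbitrary probability distributions on $\mathbb{R}$, and all of $W^{(0)},W^{(1)},b^{(0)},b^{(1)}$ are jointly independent. Then: (1) $\mathrm{Lip}(\Phi)\ge \frac{1}{4\sqrt{2}}\sqrt{d}$ with probability at least $(1-2\exp(-cN))_+(1-2\exp(-cd))_+$; (2) if $d,N>\ln(2)/c$, then $\mathbb{E}[\mathrm{Lip}(\Phi)]\ge c_1\sqrt{d}$.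
   Context: $\mathrm{ReLU}(t)=\max\{0,t\}$ componentwise; $\mathrm{Lip}(f)=\sup_{x\neq y}|f(x)-f(y)|/\|x-y\|_2$; $a_+=\max\{0,a\}$. *)

theory Defs
  imports "HOL-Probability.Probability"
begin

text \<open>Vectors of R^d are represented as functions nat => real vanishing outside {0..<d}.\<close>
definition vecs :: "nat \<Rightarrow> (nat \<Rightarrow> real) set" where
  "vecs d = {x. \<forall>j\<ge>d. x j = 0}"

definition dist_d :: "nat \<Rightarrow> (nat \<Rightarrow> real) \<Rightarrow> (nat \<Rightarrow> real) \<Rightarrow> real" where
  "dist_d d x y = sqrt (\<Sum>j<d. (x j - y j)\<^sup>2)"

definition Lip :: "nat \<Rightarrow> ((nat \<Rightarrow> real) \<Rightarrow> real) \<Rightarrow> real" where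
  "Lip d f = Sup {\<bar>f x - f y\<bar> / dist_d d x y | x y. x \<in> vecs d \<and> y \<in> vecs d \<and> x \<noteq> y}"

definition relu :: "real \<Rightarrow> real" where
  "relu t = max 0 t"

definition shallow_net ::
  "nat \<Rightarrow> nat \<Rightarrow> (nat \<Rightarrow> nat \<Rightarrow> real) \<Rightarrow> (nat \<Rightarrow> real) \<Rightarrow> (nat \<Rightarrow> real) \<Rightarrow> real
   \<Rightarrow> (nat \<Rightarrow> real) \<Rightarrow> real" where
  "shallow_net d N W0 b0 W1 b1 x =
     (\<Sum>i<N. W1 i * relu ((\<Sum>j<d. W0 i j * x j) + b0 i)) + b1"

datatype param = PW0 nat nat | PW1 nat | PB0 nat | PB1

definition params :: "nat \<Rightarrow> nat \<Rightarrow> param set" where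
  "params d N = {PW0 i j | i j. i < N \<and> j < d} \<union> {PW1 i | i. i < N}
                \<union> {PB0 i | i. i < N} \<union> {PB1}"

definition gaussian :: "real \<Rightarrow> real \<Rightarrow> real measure" where
  "gaussian \<mu> \<sigma> = density lborel (normal_density \<mu> \<sigma>)"

definition param_law :: "nat \<Rightarrow> (nat \<Rightarrow> real measure) \<Rightarrow> real measure \<Rightarrow> param \<Rightarrow> real measure" where
  "param_law N D0 D1 k = (case k of
       PW0 i j \<Rightarrow> gaussian 0 (sqrt (2 / real N))
     | PW1 i \<Rightarrow> gaussian 0 1
     | PB0 i \<Rightarrow> D0 i
     | PB1 \<Rightarrow> D1)"

definition net_space :: "nat \<Rightarrow> nat \<Rightarrow> (nat \<Rightarrow> real measure) \<Rightarrow> real measure \<Rightarrow> (param \<Rightarrow> real) measure" where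
  "net_space d N D0 D1 = PiM (params d N) (param_law N D0 D1)"

definition rand_net :: "nat \<Rightarrow> nat \<Rightarrow> (param \<Rightarrow> real) \<Rightarrow> (nat \<Rightarrow> real) \<Rightarrow> real" where
  "rand_net d N \<omega> = shallow_net d N (\<lambda>i j. \<omega> (PW0 i j)) (\<lambda>i. \<omega> (PB0 i)) (\<lambda>i. \<omega> (PW1 i)) (\<omega> PB1)"

end

theory Submission
  imports Defs
begin

lemma relu_lip: "\<bar>relu a - relu b\<bar> \<le> \<bar>a - b\<bar>"
  unfolding relu_def by auto

lemma dist_d_nonneg: "dist_d d x y \<ge> 0"
  unfolding dist_d_def by (auto intro!: sum_nonneg)

lemma dist_d_pos:
  assumes "x \<in> vecs d" "y \<in> vecs d" "x \<noteq> y"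
  shows "dist_d d x y > 0"
proof -
  obtain j where j: "x j \<noteq> y j" using assms(3) by auto
  have "j < d"
  proof (rule ccontr)
    assume "\<not> j < d"
    then have "d \<le> j" by simp
    then have "x j = 0 \<and> y j = 0" using assms(1,2) unfolding vecs_def by blast
    with j show False by simp
  qed
  then have "(x j - y j)\<^sup>2 \<le> (\<Sum>j<d. (x j - y j)\<^sup>2)"
    by (intro member_le_sum) auto
  moreover have "(x j - y j)\<^sup>2 > 0" using j by auto
  ultimately have "(\<Sum>j<d. (x j - y j)\<^sup>2) > 0" by linarith
  then show ?thesis unfolding dist_d_def by (rule real_sqrt_gt_zero)
qed

lemma inner_bound:
  "\<bar>\<Sum>j<d. w j * z j\<bar> \<le> sqrt (\<Sum>j<d. (w j)\<^sup>2) * sqrt (\<Sum>j<d. (z j)\<^sup>2)"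
proof -
  have "(\<Sum>j<d. w j * z j)\<^sup>2 \<le> (\<Sum>j<d. (w j)\<^sup>2) * (\<Sum>j<d. (z j)\<^sup>2)"
    by (rule Cauchy_Schwarz_ineq_sum)
  then have "sqrt ((\<Sum>j<d. w j * z j)\<^sup>2) \<le> sqrt ((\<Sum>j<d. (w j)\<^sup>2) * (\<Sum>j<d. (z j)\<^sup>2))"
    by (rule real_sqrt_le_mono)
  then show ?thesis by (simp only: real_sqrt_abs real_sqrt_mult)
qed

definition lipK :: "nat \<Rightarrow> nat \<Rightarrow> (nat \<Rightarrow> nat \<Rightarrow> real) \<Rightarrow> (nat \<Rightarrow> real) \<Rightarrow> real" where
  "lipK d N W0 W1 = (\<Sum>i<N. \<bar>W1 i\<bar> * sqrt (\<Sum>j<d. (W0 i j)\<^sup>2))"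

lemma net_lip:
  "\<bar>shallow_net d N W0 b0 W1 b1 x - shallow_net d N W0 b0 W1 b1 y\<bar> \<le> lipK d N W0 W1 * dist_d d x y"
proof -
  have eq: "shallow_net d N W0 b0 W1 b1 x - shallow_net d N W0 b0 W1 b1 y =
     (\<Sum>i<N. W1 i * (relu ((\<Sum>j<d. W0 i j * x j) + b0 i) - relu ((\<Sum>j<d. W0 i j * y j) + b0 i)))"
    unfolding shallow_net_def
    by (simp only: add_diff_add diff_self add_0_right sum_subtractf[symmetric] right_diff_distrib[symmetric])
  have "\<bar>(\<Sum>i<N. W1 i * (relu ((\<Sum>j<d. W0 i j * x j) + b0 i) - relu ((\<Sum>j<d. W0 i j * y j) + b0 i)))\<bar> \<le> (\<Sum>i<N. \<bar>W1 i * (relu ((\<Sum>j<d. W0 i j * x j) + b0 i) - relu ((\<Sum>j<d. W0 i j * y j) + b0 i))\<bar>)"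
    by (rule sum_abs)
  also have "\<dots> \<le> (\<Sum>i<N. \<bar>W1 i\<bar> * sqrt (\<Sum>j<d. (W0 i j)\<^sup>2) * dist_d d x y)"
  proof (rule sum_mono)
    fix i
    define R where "R = relu ((\<Sum>j<d. W0 i j * x j) + b0 i) - relu ((\<Sum>j<d. W0 i j * y j) + b0 i)"
    have h1: "\<bar>R\<bar> \<le> \<bar>(\<Sum>j<d. W0 i j * x j) - (\<Sum>j<d. W0 i j * y j)\<bar>"
      unfolding R_def using relu_lip[of "(\<Sum>j<d. W0 i j * x j) + b0 i" "(\<Sum>j<d. W0 i j * y j) + b0 i"] by (simp only: add_diff_cancel_right)
    have e2: "(\<Sum>j<d. W0 i j * x j) - (\<Sum>j<d. W0 i j * y j) = (\<Sum>j<d. W0 i j * (x j - y j))"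
      by (simp only: sum_subtractf[symmetric] right_diff_distrib)
    have h2: "\<bar>(\<Sum>j<d. W0 i j * x j) - (\<Sum>j<d. W0 i j * y j)\<bar> \<le> sqrt (\<Sum>j<d. (W0 i j)\<^sup>2) * dist_d d x y"
      unfolding e2 dist_d_def by (rule inner_bound)
    from h1 h2 have "\<bar>R\<bar> \<le> sqrt (\<Sum>j<d. (W0 i j)\<^sup>2) * dist_d d x y" by (rule order_trans)
    then have "\<bar>W1 i\<bar> * \<bar>R\<bar> \<le> \<bar>W1 i\<bar> * (sqrt (\<Sum>j<d. (W0 i j)\<^sup>2) * dist_d d x y)"
      by (rule mult_left_mono) simp
    then show "\<bar>W1 i * (relu ((\<Sum>j<d. W0 i j * x j) + b0 i) - relu ((\<Sum>j<d. W0 i j * y j) + b0 i))\<bar> \<le> \<bar>W1 i\<bar> * sqrt (\<Sum>j<d. (W0 i j)\<^sup>2) * dist_d d x y"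
      unfolding R_def by (simp only: abs_mult mult.assoc)
  qed
  also have "\<dots> = lipK d N W0 W1 * dist_d d x y"
    unfolding lipK_def by (simp only: sum_distrib_right)
  finally show ?thesis by (simp only: eq)
qed

lemma Lip_set_bdd:
  "bdd_above {\<bar>f x - f y\<bar> / dist_d d x y | x y. x \<in> vecs d \<and> y \<in> vecs d \<and> x \<noteq> y}"
  if "f = shallow_net d N W0 b0 W1 b1" for f
proof (rule bdd_aboveI)
  fix r assume "r \<in> {\<bar>f x - f y\<bar> / dist_d d x y | x y. x \<in> vecs d \<and> y \<in> vecs d \<and> x \<noteq> y}"
  then obtain x y where r: "r = \<bar>f x - f y\<bar> / dist_d d x y" and xy: "x \<in> vecs d" "y \<in> vecs d" "x \<noteq> y"
    by blast
  have dpos: "dist_d d x y > 0" using dist_d_pos[OF xy] .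
  show "r \<le> lipK d N W0 W1" unfolding r that
    by (simp only: pos_divide_le_eq[OF dpos]) (rule net_lip)
qed

lemma Lip_ge:
  assumes "x \<in> vecs d" "y \<in> vecs d" "x \<noteq> y"
  shows "\<bar>shallow_net d N W0 b0 W1 b1 x - shallow_net d N W0 b0 W1 b1 y\<bar> / dist_d d x y
     \<le> Lip d (shallow_net d N W0 b0 W1 b1)"
  unfolding Lip_def
proof (rule cSup_upper)
  show "bdd_above {\<bar>shallow_net d N W0 b0 W1 b1 x - shallow_net d N W0 b0 W1 b1 y\<bar> / dist_d d x y |x y. x \<in> vecs d \<and> y \<in> vecs d \<and> x \<noteq> y}"
    by (rule Lip_set_bdd) (rule refl)
qed (use assms in blast)

definition vec_of :: "nat \<Rightarrow> rat list \<Rightarrow> nat \<Rightarrow> real" where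
  "vec_of d xs j = (if j < d \<and> j < length xs then of_rat (xs ! j) else 0)"

definition Iq :: "nat \<Rightarrow> (rat list \<times> rat list) set" where
  "Iq d = {p. vec_of d (fst p) \<noteq> vec_of d (snd p)}"

lemma vec_of_vecs: "vec_of d xs \<in> vecs d"
  unfolding vecs_def vec_of_def by auto

definition approx :: "nat \<Rightarrow> (nat \<Rightarrow> real) \<Rightarrow> nat \<Rightarrow> rat list" where
  "approx d x n = map (\<lambda>j. Fract \<lfloor>x j * real (Suc n)\<rfloor> (int (Suc n))) [0..<d]"

lemma vec_of_approx:
  "vec_of d (approx d x n) j = (if j < d then of_int \<lfloor>x j * real (Suc n)\<rfloor> / real (Suc n) else 0)"
  unfolding vec_of_def approx_def by (simp add: of_rat_rat)

lemma floor_approx_tendsto: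
  "(\<lambda>n. of_int \<lfloor>z * real (Suc n)\<rfloor> / real (Suc n)) \<longlonglongrightarrow> (z::real)"
proof -
  have "(\<lambda>n. of_int \<lfloor>z * real (Suc n)\<rfloor> / real (Suc n) - z) \<longlonglongrightarrow> 0"
  proof (rule Lim_null_comparison)
    show "\<forall>\<^sub>F n in sequentially. norm (of_int \<lfloor>z * real (Suc n)\<rfloor> / real (Suc n) - z) \<le> inverse (real (Suc n))"
    proof (rule always_eventually, rule allI)
      fix n
      have s: "real (Suc n) > 0" by simp
      have "of_int \<lfloor>z * real (Suc n)\<rfloor> \<le> z * real (Suc n)" by (rule of_int_floor_le)
      moreover have "z * real (Suc n) < of_int \<lfloor>z * real (Suc n)\<rfloor> + 1" by (rule real_of_int_floor_add_one_gt)
      ultimately have "\<bar>of_int \<lfloor>z * real (Suc n)\<rfloor> - z * real (Suc n)\<bar> \<le> 1" by linarith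
      then have "\<bar>of_int \<lfloor>z * real (Suc n)\<rfloor> - z * real (Suc n)\<bar> / real (Suc n) \<le> 1 / real (Suc n)"
        using s by (intro divide_right_mono) simp_all
      note h = this
      have e: "of_int \<lfloor>z * real (Suc n)\<rfloor> / real (Suc n) - z = (of_int \<lfloor>z * real (Suc n)\<rfloor> - z * real (Suc n)) / real (Suc n)"
        using s by (simp add: field_simps)
      have "norm (of_int \<lfloor>z * real (Suc n)\<rfloor> / real (Suc n) - z) = \<bar>of_int \<lfloor>z * real (Suc n)\<rfloor> - z * real (Suc n)\<bar> / real (Suc n)"
        unfolding e real_norm_def abs_divide by simp
      also have "\<dots> \<le> 1 / real (Suc n)" by (rule h)
      also have "\<dots> = inverse (real (Suc n))" by (simp add: inverse_eq_divide)
      finally show "norm (of_int \<lfloor>z * real (Suc n)\<rfloor> / real (Suc n) - z) \<le> inverse (real (Suc n))" .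
    qed
    show "(\<lambda>n. inverse (real (Suc n))) \<longlonglongrightarrow> 0"
      by (rule LIMSEQ_inverse_real_of_nat)
  qed
  then have "(\<lambda>n. (of_int \<lfloor>z * real (Suc n)\<rfloor> / real (Suc n) - z) + z) \<longlonglongrightarrow> 0 + z"
    by (intro tendsto_add) auto
  then show ?thesis by simp
qed

lemma approx_tendsto:
  assumes "x \<in> vecs d"
  shows "(\<lambda>n. vec_of d (approx d x n) j) \<longlonglongrightarrow> x j"
proof (cases "j < d")
  case True
  then show ?thesis unfolding vec_of_approx using floor_approx_tendsto by simp
next
  case False
  then have "x j = 0" using assms unfolding vecs_def by simp
  then show ?thesis using False unfolding vec_of_approx by simp
qed

lemma net_tendsto:
  assumes "\<And>j. (\<lambda>n. X n j) \<longlonglongrightarrow> x j"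
  shows "(\<lambda>n. shallow_net d N W0 b0 W1 b1 (X n)) \<longlonglongrightarrow> shallow_net d N W0 b0 W1 b1 x"
  unfolding shallow_net_def relu_def by (intro tendsto_intros assms)

lemma dist_tendsto:
  assumes "\<And>j. (\<lambda>n. X n j) \<longlonglongrightarrow> x j" "\<And>j. (\<lambda>n. Y n j) \<longlonglongrightarrow> y j"
  shows "(\<lambda>n. dist_d d (X n) (Y n)) \<longlonglongrightarrow> dist_d d x y"
  unfolding dist_d_def by (intro tendsto_intros assms)

lemma Lip_SUP:
  assumes d: "d \<ge> 1"
  shows "Lip d (shallow_net d N W0 b0 W1 b1) = (SUP p\<in>Iq d. \<bar>shallow_net d N W0 b0 W1 b1 (vec_of d (fst p)) - shallow_net d N W0 b0 W1 b1 (vec_of d (snd p))\<bar>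
            / dist_d d (vec_of d (fst p)) (vec_of d (snd p)))"
proof -
  define f where "f = shallow_net d N W0 b0 W1 b1"
  define S where "S = {\<bar>f x - f y\<bar> / dist_d d x y | x y. x \<in> vecs d \<and> y \<in> vecs d \<and> x \<noteq> y}"
  define G where "G p = \<bar>f (vec_of d (fst p)) - f (vec_of d (snd p))\<bar> / dist_d d (vec_of d (fst p)) (vec_of d (snd p))" for p
  have Sb: "bdd_above S" unfolding S_def by (rule Lip_set_bdd) (simp add: f_def)
  have GS: "G ` Iq d \<subseteq> S"
  proof
    fix r assume "r \<in> G ` Iq d"
    then obtain p where p: "p \<in> Iq d" "r = G p" by blast
    show "r \<in> S" unfolding S_def p(2) G_def
      using p(1) vec_of_vecs unfolding Iq_def by blast
  qed
  have Gb: "bdd_above (G ` Iq d)" using Sb GS by (rule bdd_above_mono)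
  have Iq_ne: "([1], [0]) \<in> Iq d"
    unfolding Iq_def vec_of_def using d by (auto simp: fun_eq_iff intro!: exI[of _ 0])
  then have Iqne: "Iq d \<noteq> {}" by blast
  have Sne: "S \<noteq> {}" using GS Iqne by blast
  have le1: "Sup S \<le> (SUP p\<in>Iq d. G p)"
  proof (rule cSup_least[OF Sne])
    fix r assume "r \<in> S"
    then obtain x y where xy: "x \<in> vecs d" "y \<in> vecs d" "x \<noteq> y" and r: "r = \<bar>f x - f y\<bar> / dist_d d x y"
      unfolding S_def by blast
    show "r \<le> (SUP p\<in>Iq d. G p)"
    proof (rule field_le_epsilon)
      fix e :: real assume e: "e > 0"
      define X where "X n = vec_of d (approx d x n)" for n
      define Y where "Y n = vec_of d (approx d y n)" for n
      have Xt: "\<And>j. (\<lambda>n. X n j) \<longlonglongrightarrow> x j" unfolding X_def by (rule approx_tendsto[OF xy(1)])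
      have Yt: "\<And>j. (\<lambda>n. Y n j) \<longlonglongrightarrow> y j" unfolding Y_def by (rule approx_tendsto[OF xy(2)])
      have dpos: "dist_d d x y > 0" by (rule dist_d_pos[OF xy])
      have dt: "(\<lambda>n. dist_d d (X n) (Y n)) \<longlonglongrightarrow> dist_d d x y" by (rule dist_tendsto[OF Xt Yt])
      have ft: "(\<lambda>n. \<bar>f (X n) - f (Y n)\<bar> / dist_d d (X n) (Y n)) \<longlonglongrightarrow> \<bar>f x - f y\<bar> / dist_d d x y"
        unfolding f_def
        by (intro tendsto_divide tendsto_rabs tendsto_diff net_tendsto dt Xt Yt) (use dpos in simp)
      have ev1: "\<forall>\<^sub>F n in sequentially. \<bar>f (X n) - f (Y n)\<bar> / dist_d d (X n) (Y n) > r - e"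
        using order_tendstoD(1)[OF ft, of "r - e"] r e by simp
      have ev2: "\<forall>\<^sub>F n in sequentially. dist_d d (X n) (Y n) > 0"
        using order_tendstoD(1)[OF dt dpos] .
      from eventually_conj[OF ev1 ev2] obtain n where
        n1: "\<bar>f (X n) - f (Y n)\<bar> / dist_d d (X n) (Y n) > r - e" and n2: "dist_d d (X n) (Y n) > 0"
        by (auto simp: eventually_sequentially)
      have "X n \<noteq> Y n"
      proof
        assume "X n = Y n"
        then have "dist_d d (X n) (Y n) = 0" unfolding dist_d_def by simp
        with n2 show False by simp
      qed
      then have pin: "(approx d x n, approx d y n) \<in> Iq d" unfolding Iq_def X_def Y_def by simp
      have "G (approx d x n, approx d y n) \<le> (SUP p\<in>Iq d. G p)"
        by (rule cSUP_upper[OF pin Gb])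
      moreover have "G (approx d x n, approx d y n) = \<bar>f (X n) - f (Y n)\<bar> / dist_d d (X n) (Y n)"
        unfolding G_def X_def Y_def by simp
      ultimately show "r \<le> (SUP p\<in>Iq d. G p) + e" using n1 by linarith
    qed
  qed
  have le2: "(SUP p\<in>Iq d. G p) \<le> Sup S"
  proof (rule cSUP_least[OF Iqne])
    fix p assume "p \<in> Iq d"
    then have "G p \<in> S" using GS by blast
    then show "G p \<le> Sup S" by (rule cSup_upper[OF _ Sb])
  qed
  have "Lip d f = Sup S" unfolding Lip_def S_def ..
  also have "\<dots> = (SUP p\<in>Iq d. G p)" using le1 le2 by linarith
  finally show ?thesis unfolding f_def G_def .
qed

lemma relu_diff: "\<bar>relu (p + b) - relu (- p + b) - p\<bar> \<le> \<bar>b\<bar>"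
  unfolding relu_def by (auto simp: max_def)

lemma lower_bound:
  fixes W0 :: "nat \<Rightarrow> nat \<Rightarrow> real" and W1 b0 :: "nat \<Rightarrow> real"
  assumes d: "d \<ge> 1"
  assumes q: "(\<Sum>j<d. (\<Sum>i<N. W1 i * W0 i j)\<^sup>2) \<ge> real d / 2"
  shows "sqrt (real d) / (4 * sqrt 2) \<le> Lip d (shallow_net d N W0 b0 W1 b1)"
proof -
  define v where "v j = (\<Sum>i<N. W1 i * W0 i j)" for j
  define q where "q = (\<Sum>j<d. (v j)\<^sup>2)"
  have qd: "q \<ge> real d / 2" using q unfolding q_def v_def by simp
  have qpos: "q > 0" using qd d by simp
  define B where "B = (\<Sum>i<N. \<bar>W1 i\<bar> * \<bar>b0 i\<bar>)"
  have B0: "B \<ge> 0" unfolding B_def by (intro sum_nonneg) simp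
  define t where "t = 2 * B / q + 1"
  have "2 * B / q \<ge> 0" using B0 qpos by simp
  then have tpos: "t > 0" unfolding t_def by linarith
  have tq: "t * q = 2 * B + q" unfolding t_def using qpos by (simp add: field_simps)
  define u where "u j = (if j < d then v j else 0)" for j
  define x where "x j = t * u j" for j
  define y where "y j = - (t * u j)" for j
  have xv: "x \<in> vecs d" unfolding vecs_def x_def u_def by simp
  have yv: "y \<in> vecs d" unfolding vecs_def y_def u_def by simp
  obtain j0 where j0: "j0 < d" "v j0 \<noteq> 0"
  proof (rule ccontr)
    assume "\<not> thesis"
    then have "\<forall>j<d. v j = 0" using that by blast
    then have "q = 0" unfolding q_def by simp
    with qpos show False by simp
  qed
  have xy: "x \<noteq> y"
  proof
    assume "x = y"
    then have "x j0 = y j0" by simp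
    then have "t * v j0 = 0" unfolding x_def y_def u_def using j0 by simp
    with tpos j0 show False by simp
  qed
  define a where "a i = (\<Sum>j<d. W0 i j * u j)" for i
  have ax: "(\<Sum>j<d. W0 i j * x j) = t * a i" for i
    unfolding a_def x_def by (simp add: sum_distrib_left mult.left_commute)
  have ay: "(\<Sum>j<d. W0 i j * y j) = - (t * a i)" for i
    unfolding a_def y_def by (simp add: sum_distrib_left mult.left_commute sum_negf)
  define F where "F = shallow_net d N W0 b0 W1 b1"
  have Fdiff: "F x - F y = (\<Sum>i<N. W1 i * (relu (t * a i + b0 i) - relu (- (t * a i) + b0 i)))"
    unfolding F_def shallow_net_def ax ay
    by (simp only: add_diff_add diff_self add_0_right sum_subtractf[symmetric] right_diff_distrib[symmetric])
  have main: "(\<Sum>i<N. W1 i * (t * a i)) = t * q"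
  proof -
    have "(\<Sum>i<N. W1 i * (t * a i)) = t * (\<Sum>i<N. \<Sum>j<d. W1 i * W0 i j * u j)"
      unfolding a_def by (simp add: sum_distrib_left mult.assoc mult.left_commute)
    also have "(\<Sum>i<N. \<Sum>j<d. W1 i * W0 i j * u j) = (\<Sum>j<d. \<Sum>i<N. W1 i * W0 i j * u j)"
      by (rule sum.swap)
    also have "\<dots> = (\<Sum>j<d. v j * u j)"
      unfolding v_def by (simp add: sum_distrib_right)
    also have "\<dots> = q"
      unfolding q_def u_def by (simp add: power2_eq_square)
    finally show ?thesis .
  qed
  have err: "\<bar>(F x - F y) - t * q\<bar> \<le> B"
  proof -
    have e: "(F x - F y) - t * q = (\<Sum>i<N. W1 i * (relu (t * a i + b0 i) - relu (- (t * a i) + b0 i) - t * a i))"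
      unfolding Fdiff main[symmetric] by (simp only: sum_subtractf[symmetric] right_diff_distrib[symmetric])
    have "\<bar>(\<Sum>i<N. W1 i * (relu (t * a i + b0 i) - relu (- (t * a i) + b0 i) - t * a i))\<bar> \<le> (\<Sum>i<N. \<bar>W1 i * (relu (t * a i + b0 i) - relu (- (t * a i) + b0 i) - t * a i)\<bar>)"
      by (rule sum_abs)
    also have "\<dots> \<le> B"
      unfolding B_def
    proof (rule sum_mono)
      fix i
      have "\<bar>W1 i\<bar> * \<bar>relu (t * a i + b0 i) - relu (- (t * a i) + b0 i) - t * a i\<bar> \<le> \<bar>W1 i\<bar> * \<bar>b0 i\<bar>"
        by (rule mult_left_mono[OF relu_diff]) simp
      then show "\<bar>W1 i * (relu (t * a i + b0 i) - relu (- (t * a i) + b0 i) - t * a i)\<bar> \<le> \<bar>W1 i\<bar> * \<bar>b0 i\<bar>"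
        by (simp only: abs_mult)
    qed
    finally show ?thesis by (simp only: e)
  qed
  have num: "\<bar>F x - F y\<bar> \<ge> t * q / 2"
    using err tq B0 qpos by linarith
  have dist: "dist_d d x y = 2 * t * sqrt q"
  proof -
    have "(\<Sum>j<d. (x j - y j)\<^sup>2) = (\<Sum>j<d. (2 * t)\<^sup>2 * (v j)\<^sup>2)"
      unfolding x_def y_def u_def by (intro sum.cong) (simp_all add: power2_eq_square)
    also have "\<dots> = (2 * t)\<^sup>2 * q" unfolding q_def by (simp add: sum_distrib_left)
    finally show ?thesis unfolding dist_d_def using tpos by (simp add: real_sqrt_mult)
  qed
  have dpos: "dist_d d x y > 0" by (rule dist_d_pos[OF xv yv xy])
  have sq: "sqrt q * sqrt q = q" using qpos by simp
  have "sqrt q / 4 = (t * q / 2) / (2 * t * sqrt q)"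
    using tpos qpos sq by (simp add: field_simps)
  also have "\<dots> \<le> \<bar>F x - F y\<bar> / dist_d d x y"
    unfolding dist using num tpos qpos by (intro divide_right_mono) simp_all
  also have "\<dots> \<le> Lip d F"
    unfolding F_def by (rule Lip_ge[OF xv yv xy])
  finally have L: "sqrt q / 4 \<le> Lip d F" .
  have "sqrt (real d) / sqrt 2 = sqrt (real d / 2)" by (simp add: real_sqrt_divide)
  also have "\<dots> \<le> sqrt q" using qd by (rule real_sqrt_le_mono)
  finally have "sqrt (real d) / (4 * sqrt 2) \<le> sqrt q / 4" by (simp add: field_simps)
  with L show ?thesis unfolding F_def by linarith
qed

lemma trunc_ineq: "(a::real) \<ge> 0 \<Longrightarrow> a - a\<^sup>2 / 12 \<le> min a 3"
proof -
  assume a: "a \<ge> 0"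
  have "0 \<le> (a - 6)\<^sup>2" by simp
  then have "a - a\<^sup>2 / 12 \<le> 3" by (simp add: power2_eq_square field_simps)
  moreover have "a - a\<^sup>2 / 12 \<le> a" by simp
  ultimately show ?thesis by simp
qed

lemma std_trunc_integral:
  "(\<integral>z. std_normal_density z * min (z\<^sup>2) 3 \<partial>lborel) \<ge> 3 / 4"
proof -
  have i1: "integrable lborel (\<lambda>z. std_normal_density z * z ^ (2 * 1))"
    by (rule integrable_std_normal_moment)
  have i2: "integrable lborel (\<lambda>z. std_normal_density z * z ^ (2 * 2))"
    by (rule integrable_std_normal_moment)
  have v1: "(\<integral>z. std_normal_density z * z ^ (2 * 1) \<partial>lborel) = 1"
    using integral_std_normal_moment_even[of 1] by simp
  have v2: "(\<integral>z. std_normal_density z * z ^ (2 * 2) \<partial>lborel) = 3"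
    using integral_std_normal_moment_even[of 2] by (simp add: fact_numeral)
  have i3: "integrable lborel (\<lambda>z. std_normal_density z * z ^ (2 * 1) - std_normal_density z * z ^ (2 * 2) / 12)"
    by (rule Bochner_Integration.integrable_diff[OF i1 integrable_divide[OF i2]])
  have v3: "(\<integral>z. std_normal_density z * z ^ (2 * 1) - std_normal_density z * z ^ (2 * 2) / 12 \<partial>lborel) = 3 / 4"
    using i1 i2 v1 v2 by (simp add: integral_diff integral_divide)
  have i4: "integrable lborel (\<lambda>z. std_normal_density z * min (z\<^sup>2) 3)"
  proof (rule Bochner_Integration.integrable_bound)
    show "integrable lborel (\<lambda>z. 3 * std_normal_density z)" by simp
    show "(\<lambda>z. std_normal_density z * min (z\<^sup>2) 3) \<in> borel_measurable lborel" by measurable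
    show "AE z in lborel. norm (std_normal_density z * min (z\<^sup>2) 3) \<le> norm (3 * std_normal_density z)"
    proof (rule AE_I2)
      fix z :: real
      have "0 \<le> std_normal_density z" by simp
      moreover have "0 \<le> min (z\<^sup>2) 3" by simp
      moreover have "min (z\<^sup>2) 3 \<le> 3" by simp
      ultimately have "std_normal_density z * min (z\<^sup>2) 3 \<le> std_normal_density z * 3"
        by (intro mult_left_mono) simp_all
      then show "norm (std_normal_density z * min (z\<^sup>2) 3) \<le> norm (3 * std_normal_density z)"
        by (simp add: abs_mult mult.commute)
    qed
  qed
  have "3 / 4 = (\<integral>z. std_normal_density z * z ^ (2 * 1) - std_normal_density z * z ^ (2 * 2) / 12 \<partial>lborel)"
    using v3 by simp
  also have "\<dots> \<le> (\<integral>z. std_normal_density z * min (z\<^sup>2) 3 \<partial>lborel)"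
  proof (rule integral_mono[OF i3 i4])
    fix z :: real
    have "z\<^sup>2 - (z\<^sup>2)\<^sup>2 / 12 \<le> min (z\<^sup>2) 3" by (rule trunc_ineq) simp
    then have "std_normal_density z * (z\<^sup>2 - (z\<^sup>2)\<^sup>2 / 12) \<le> std_normal_density z * min (z\<^sup>2) 3"
      by (rule mult_left_mono) simp
    moreover have "std_normal_density z * z ^ (2 * 1) - std_normal_density z * z ^ (2 * 2) / 12
       = std_normal_density z * (z\<^sup>2 - (z\<^sup>2)\<^sup>2 / 12)"
    proof -
      have a: "z ^ (2 * 1) = z\<^sup>2" by simp
      have b: "z ^ (2 * 2) = (z\<^sup>2)\<^sup>2" by (simp only: power_mult)
      show ?thesis unfolding a b by (simp only: right_diff_distrib times_divide_eq_right)
    qed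
    ultimately show "std_normal_density z * z ^ (2 * 1) - std_normal_density z * z ^ (2 * 2) / 12 \<le> std_normal_density z * min (z\<^sup>2) 3"
      by simp
  qed
  finally show ?thesis .
qed

lemma (in prob_space) trunc_expect:
  assumes s: "\<sigma> > 0" and D: "distributed M lborel Y (normal_density 0 \<sigma>)"
  shows "expectation (\<lambda>x. min ((Y x / \<sigma>)\<^sup>2) 3) \<ge> 3 / 4"
proof -
  have Z: "distributed M lborel (\<lambda>x. (Y x - 0) / \<sigma>) std_normal_density"
    using D normal_standard_normal_convert[OF s] by simp
  then have Z': "distributed M lborel (\<lambda>x. Y x / \<sigma>) std_normal_density" by simp
  have "(\<integral>z. std_normal_density z * min (z\<^sup>2) 3 \<partial>lborel) = expectation (\<lambda>x. min ((Y x / \<sigma>)\<^sup>2) 3)"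
    by (rule distributed_integral[OF Z', of "\<lambda>z. min (z\<^sup>2) 3"]) simp_all
  with std_trunc_integral show ?thesis by simp
qed

lemma (in prob_space) hoeff_gauss:
  assumes fin: "finite I" and ne: "I \<noteq> {}" and ind: "indep_vars (\<lambda>_. borel) Y I"
    and s: "\<sigma> > 0" and D: "\<And>i. i \<in> I \<Longrightarrow> distributed M lborel (Y i) (normal_density 0 \<sigma>)"
  shows "prob {x\<in>space M. (\<Sum>i\<in>I. min ((Y i x / \<sigma>)\<^sup>2) 3) < real (card I) / 2} \<le> exp (- real (card I) / 72)"
proof -
  define X where "X i x = min ((Y i x / \<sigma>)\<^sup>2) 3" for i x
  have indX: "indep_vars (\<lambda>_. borel) X I"
    unfolding X_def
    by (rule indep_vars_compose2[OF ind, where Y="\<lambda>i y. min ((y / \<sigma>)\<^sup>2) 3"]) simp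
  interpret H: Hoeffding_ineq M I X "\<lambda>_. 0" "\<lambda>_. 3" "\<Sum>i\<in>I. expectation (X i)"
  proof unfold_locales
    show "finite I" by (rule fin)
    show "indep_vars (\<lambda>_. borel) X I" by (rule indX)
    fix i assume "i \<in> I"
    show "AE x in M. X i x \<in> {0..3}" unfolding X_def by simp
  qed simp
  have n0: "real (card I) > 0" using fin ne by (simp add: card_gt_0_iff)
  have mu: "(\<Sum>i\<in>I. expectation (X i)) \<ge> 3 / 4 * real (card I)"
  proof -
    have "(\<Sum>i\<in>I. (3/4::real)) \<le> (\<Sum>i\<in>I. expectation (X i))"
      by (rule sum_mono) (unfold X_def, rule trunc_expect[OF s D])
    then show ?thesis by simp
  qed
  have sq: "(\<Sum>i\<in>I. ((3::real) - 0)\<^sup>2) = 9 * real (card I)" by simp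
  have "prob {x\<in>space M. (\<Sum>i\<in>I. X i x) \<le> (\<Sum>i\<in>I. expectation (X i)) - real (card I) / 4}
      \<le> exp (-2 * (real (card I) / 4)\<^sup>2 / (\<Sum>i\<in>I. ((3::real) - 0)\<^sup>2))"
    by (rule H.Hoeffding_ineq_le) (use n0 in simp_all)
  also have "-2 * (real (card I) / 4)\<^sup>2 / (\<Sum>i\<in>I. ((3::real) - 0)\<^sup>2) = - real (card I) / 72"
    unfolding sq using n0 by (simp add: power2_eq_square field_simps)
  finally have hb: "prob {x\<in>space M. (\<Sum>i\<in>I. X i x) \<le> (\<Sum>i\<in>I. expectation (X i)) - real (card I) / 4}
      \<le> exp (- real (card I) / 72)" .
  have meas: "{x\<in>space M. (\<Sum>i\<in>I. X i x) \<le> (\<Sum>i\<in>I. expectation (X i)) - real (card I) / 4} \<in> events"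
    using H.random_variable by measurable
  have "prob {x\<in>space M. (\<Sum>i\<in>I. X i x) < real (card I) / 2}
     \<le> prob {x\<in>space M. (\<Sum>i\<in>I. X i x) \<le> (\<Sum>i\<in>I. expectation (X i)) - real (card I) / 4}"
    by (rule finite_measure_mono[OF _ meas]) (use mu in auto)
  with hb show ?thesis unfolding X_def by simp
qed

lemma indep_coords:
  assumes M: "\<And>k. prob_space (M' k)" and ne: "J \<noteq> {}"
  shows "prob_space.indep_vars (PiM J M') M' (\<lambda>k \<omega>. \<omega> k) J"
proof -
  interpret P: prob_space "PiM J M'" by (rule prob_space_PiM) (rule M)
  have rv: "\<And>k. k \<in> J \<Longrightarrow> (\<lambda>\<omega>. \<omega> k) \<in> measurable (PiM J M') (M' k)"
    by (rule measurable_component_singleton)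
  have l: "distr (PiM J M') (PiM J M') (\<lambda>x. \<lambda>k\<in>J. x k) = PiM J M'"
  proof -
    have "distr (PiM J M') (PiM J M') (\<lambda>x. \<lambda>k\<in>J. x k) = distr (PiM J M') (PiM J M') (\<lambda>x. x)"
      by (rule distr_cong) (auto simp: space_PiM PiE_def extensional_restrict)
    also have "\<dots> = PiM J M'" by (rule distr_id)
    finally show ?thesis .
  qed
  have r: "PiM J (\<lambda>k. distr (PiM J M') (M' k) (\<lambda>\<omega>. \<omega> k)) = PiM J M'"
    by (rule PiM_cong) (auto intro!: distr_PiM_component M)
  show ?thesis
    by (subst P.indep_vars_iff_distr_eq_PiM'[OF ne rv]) (simp_all add: l r)
qed

lemma indep_regroup:
  assumes M: "\<And>k. prob_space (M' k)" and ne: "J \<noteq> {}"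
    and K: "\<And>l. l \<in> L \<Longrightarrow> K l \<subseteq> J" and disj: "disjoint_family_on K L"
    and g: "\<And>l. l \<in> L \<Longrightarrow> g l \<in> borel_measurable (PiM (K l) M')"
  shows "prob_space.indep_vars (PiM J M') (\<lambda>_. borel) (\<lambda>l \<omega>. g l (restrict \<omega> (K l))) L"
proof -
  interpret P: prob_space "PiM J M'" by (rule prob_space_PiM) (rule M)
  have "P.indep_vars (\<lambda>l. PiM (K l) M') (\<lambda>l \<omega>. restrict (\<lambda>k. \<omega> k) (K l)) L"
    by (rule P.indep_vars_restrict[OF indep_coords[OF M ne] K disj])
  then have "P.indep_vars (\<lambda>_. borel) (\<lambda>l \<omega>. g l (restrict (\<lambda>k. \<omega> k) (K l))) L"
    by (rule P.indep_vars_compose2) (rule g)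
  then show ?thesis by simp
qed

lemma coord_distributed:
  assumes M: "\<And>k. prob_space (M' k)" and k: "k \<in> J" and Mk: "M' k = density lborel f"
    and f: "f \<in> borel_measurable lborel"
  shows "distributed (PiM J M') lborel (\<lambda>\<omega>. \<omega> k) f"
  unfolding distributed_def
proof (intro conjI)
  have s: "sets (M' k) = sets lborel" unfolding Mk by simp
  have "distr (PiM J M') lborel (\<lambda>\<omega>. \<omega> k) = distr (PiM J M') (M' k) (\<lambda>\<omega>. \<omega> k)"
    by (rule distr_cong) (simp_all add: s)
  also have "\<dots> = M' k" by (rule distr_PiM_component[OF M k])
  finally have c: "distr (PiM J M') lborel (\<lambda>\<omega>. \<omega> k) = M' k" .
  show "distr (PiM J M') lborel (\<lambda>\<omega>. \<omega> k) = density lborel f" using c Mk by (rule trans)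
  show "f \<in> borel_measurable lborel" by (rule f)
  have "(\<lambda>\<omega>. \<omega> k) \<in> measurable (PiM J M') (M' k)" by (rule measurable_component_singleton[OF k])
  moreover have eqm: "measurable (PiM J M') (M' k) = measurable (PiM J M') lborel"
    by (rule measurable_cong_sets[OF refl s])
  ultimately show "(\<lambda>\<omega>. \<omega> k) \<in> measurable (PiM J M') lborel" by (simp only: eqm)
qed

definition lawx :: "nat \<Rightarrow> nat \<Rightarrow> (nat \<Rightarrow> real measure) \<Rightarrow> real measure \<Rightarrow> param \<Rightarrow> real measure" where
  "lawx d N D0 D1 k = (if k \<in> params d N then param_law N D0 D1 k else gaussian 0 1)"

definition hyps :: "nat \<Rightarrow> (nat \<Rightarrow> real measure) \<Rightarrow> real measure \<Rightarrow> bool" where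
  "hyps N D0 D1 \<longleftrightarrow> N \<ge> 1 \<and> (\<forall>i<N. prob_space (D0 i) \<and> sets (D0 i) = sets borel) \<and>
     prob_space D1 \<and> sets D1 = sets borel"

lemma gaussian_prob: "\<sigma> > 0 \<Longrightarrow> prob_space (gaussian \<mu> \<sigma>)"
  unfolding gaussian_def by (rule prob_space_normal_density)

lemma sets_gaussian: "sets (gaussian \<mu> \<sigma>) = sets borel"
  unfolding gaussian_def by simp

lemma params_simps[simp]:
  "PW0 i j \<in> params d N \<longleftrightarrow> i < N \<and> j < d"
  "PW1 i \<in> params d N \<longleftrightarrow> i < N"
  "PB0 i \<in> params d N \<longleftrightarrow> i < N"
  "PB1 \<in> params d N"
  unfolding params_def by auto

lemma params_finite: "finite (params d N)"
proof -
  have "params d N \<subseteq> (\<lambda>(i, j). PW0 i j) ` ({..<N} \<times> {..<d}) \<union> PW1 ` {..<N} \<union> PB0 ` {..<N} \<union> {PB1}"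
    unfolding params_def by auto
  moreover have "finite ((\<lambda>(i, j). PW0 i j) ` ({..<N} \<times> {..<d}) \<union> PW1 ` {..<N} \<union> PB0 ` {..<N} \<union> {PB1})"
    by simp
  ultimately show ?thesis by (rule finite_subset)
qed

lemma lawx_prob:
  assumes h: "hyps N D0 D1"
  shows "prob_space (lawx d N D0 D1 k)"
proof -
  have N: "real N > 0" using h unfolding hyps_def by simp
  show ?thesis
  proof (cases "k \<in> params d N")
    case True
    then show ?thesis
      using h N unfolding lawx_def param_law_def hyps_def
      by (cases k) (auto intro!: gaussian_prob)
  next
    case False
    then show ?thesis unfolding lawx_def by (simp add: gaussian_prob)
  qed
qed

lemma lawx_sets:
  assumes h: "hyps N D0 D1"
  shows "sets (lawx d N D0 D1 k) = sets borel"
proof (cases "k \<in> params d N")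
  case True
  then show ?thesis
    using h unfolding lawx_def param_law_def hyps_def
    by (cases k) (auto simp: sets_gaussian)
next
  case False
  then show ?thesis unfolding lawx_def by (simp add: sets_gaussian)
qed

lemma lawx_W0: "i < N \<Longrightarrow> j < d \<Longrightarrow> lawx d N D0 D1 (PW0 i j) = gaussian 0 (sqrt (2 / real N))"
  unfolding lawx_def param_law_def by simp

lemma lawx_W1: "i < N \<Longrightarrow> lawx d N D0 D1 (PW1 i) = gaussian 0 1"
  unfolding lawx_def param_law_def by simp

lemma net_space_eq: "net_space d N D0 D1 = PiM (params d N) (lawx d N D0 D1)"
  unfolding net_space_def by (rule PiM_cong) (simp_all add: lawx_def)

lemma comp_borel:
  assumes "\<And>k. sets (M' k) = sets borel" "k \<in> K"
  shows "(\<lambda>z. z k) \<in> borel_measurable (PiM K M')"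
proof -
  have "(\<lambda>z. z k) \<in> measurable (PiM K M') (M' k)" by (rule measurable_component_singleton[OF assms(2)])
  moreover have eqm: "measurable (PiM K M') (M' k) = measurable (PiM K M') borel"
    by (rule measurable_cong_sets[OF refl assms(1)])
  ultimately show ?thesis by (simp only: eqm)
qed

lemma outer_bound:
  fixes d :: nat
  assumes h: "hyps N D0 D1"
  defines "M' \<equiv> lawx d N D0 D1"
  shows "prob_space.prob (PiM (PW1 ` {..<N}) M')
     {x \<in> space (PiM (PW1 ` {..<N}) M'). (\<Sum>i<N. min ((x (PW1 i) / 1)\<^sup>2) 3) < real N / 2}
     \<le> exp (- real N / 72)"
proof -
  have Mp: "\<And>k. prob_space (M' k)" unfolding M'_def by (rule lawx_prob[OF h])
  have Ms: "\<And>k. sets (M' k) = sets borel" unfolding M'_def by (rule lawx_sets[OF h])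
  have N1: "N \<ge> 1" using h unfolding hyps_def by simp
  interpret P: prob_space "PiM (PW1 ` {..<N}) M'" by (rule prob_space_PiM) (rule Mp)
  have ne: "PW1 ` {..<N} \<noteq> {}" using N1 by (simp add: lessThan_empty_iff)
  have ind0: "P.indep_vars (\<lambda>_. borel) (\<lambda>i x. (\<lambda>z. z (PW1 i)) (restrict x {PW1 i})) {..<N}"
    by (rule indep_regroup[OF Mp ne]) (auto simp: disjoint_family_on_def intro!: comp_borel Ms)
  have ind: "P.indep_vars (\<lambda>_. borel) (\<lambda>i x. x (PW1 i)) {..<N}"
    using ind0 by simp
  have D: "distributed (PiM (PW1 ` {..<N}) M') lborel (\<lambda>x. x (PW1 i)) (normal_density 0 1)" if "i \<in> {..<N}" for i
    using that by (intro coord_distributed[OF Mp]) (auto simp: M'_def lawx_W1 gaussian_def)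
  have "P.prob {x \<in> space (PiM (PW1 ` {..<N}) M'). (\<Sum>i\<in>{..<N}. min ((x (PW1 i) / 1)\<^sup>2) 3) < real (card {..<N}) / 2}
     \<le> exp (- real (card {..<N}) / 72)"
    by (rule P.hoeff_gauss[OF _ _ ind _ D]) (use N1 in \<open>auto simp: lessThan_empty_iff\<close>)
  then show ?thesis by simp
qed

lemma inner_prob_bound:
  assumes h: "hyps N D0 D1" and d1: "d \<ge> 1"
  and apos: "(\<Sum>i<N. (a i)\<^sup>2) > 0"
  defines "M' \<equiv> lawx d N D0 D1" and "J \<equiv> params d N - PW1 ` {..<N}"
  defines "s \<equiv> sqrt (2 / real N * (\<Sum>i<N. (a i)\<^sup>2))"
  shows "prob_space.prob (PiM J M')
     {y \<in> space (PiM J M'). (\<Sum>j<d. min (((\<Sum>i<N. a i * y (PW0 i j)) / s)\<^sup>2) 3) < real d / 2}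
     \<le> exp (- real d / 72)"
proof -
  have Mp: "\<And>k. prob_space (M' k)" unfolding M'_def by (rule lawx_prob[OF h])
  have Ms: "\<And>k. sets (M' k) = sets borel" unfolding M'_def by (rule lawx_sets[OF h])
  have N1: "N \<ge> 1" using h unfolding hyps_def by simp
  interpret P: prob_space "PiM J M'" by (rule prob_space_PiM) (rule Mp)
  have inJ: "PW0 i j \<in> J" if "i < N" "j < d" for i j
    using that unfolding J_def by auto
  have ne: "J \<noteq> {}" using inJ[of 0 0] N1 d1 by auto
  define K where "K j = (\<lambda>i. PW0 i j) ` {..<N}" for j
  have ind0: "P.indep_vars (\<lambda>_. borel) (\<lambda>j y. (\<lambda>z. \<Sum>i<N. a i * z (PW0 i j)) (restrict y (K j))) {..<d}"
  proof (rule indep_regroup[OF Mp ne])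
    show "\<And>l. l \<in> {..<d} \<Longrightarrow> K l \<subseteq> J" unfolding K_def using inJ by auto
    show "disjoint_family_on K {..<d}" unfolding K_def disjoint_family_on_def by auto
    fix l assume "l \<in> {..<d}"
    show "(\<lambda>z. \<Sum>i<N. a i * z (PW0 i l)) \<in> borel_measurable (PiM (K l) M')"
    proof (rule borel_measurable_sum)
      fix i assume "i \<in> {..<N}"
      then have "PW0 i l \<in> K l" unfolding K_def by auto
      then have "(\<lambda>z. z (PW0 i l)) \<in> borel_measurable (PiM (K l) M')" by (rule comp_borel[OF Ms])
      then show "(\<lambda>z. a i * z (PW0 i l)) \<in> borel_measurable (PiM (K l) M')" by simp
    qed
  qed
  have ind: "P.indep_vars (\<lambda>_. borel) (\<lambda>j y. \<Sum>i<N. a i * y (PW0 i j)) {..<d}"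
  proof -
    have "(\<lambda>y. (\<lambda>z. \<Sum>i<N. a i * z (PW0 i j)) (restrict y (K j))) = (\<lambda>y. \<Sum>i<N. a i * y (PW0 i j))" for j
      unfolding K_def by (auto intro!: sum.cong)
    then show ?thesis using ind0 by simp
  qed
  define A where "A = {i. i < N \<and> a i \<noteq> 0}"
  have Afin: "finite A" unfolding A_def by simp
  have Ane: "A \<noteq> {}"
  proof
    assume "A = {}"
    then have "\<forall>i<N. a i = 0" unfolding A_def by auto
    then have "(\<Sum>i<N. (a i)\<^sup>2) = 0" by simp
    with apos show False by simp
  qed
  define \<sigma>0 where "\<sigma>0 = sqrt (2 / real N)"
  have s0: "\<sigma>0 > 0" unfolding \<sigma>0_def using N1 by simp
  have sumA: "(\<Sum>i\<in>A. f i) = (\<Sum>i<N. f i)" if "\<And>i. a i = 0 \<Longrightarrow> f i = 0" for f :: "nat \<Rightarrow> real"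
    unfolding A_def by (rule sum.mono_neutral_left) (auto intro: that)
  have D: "distributed (PiM J M') lborel (\<lambda>y. \<Sum>i<N. a i * y (PW0 i j)) (normal_density 0 s)"
    if j: "j \<in> {..<d}" for j
  proof -
    have indZ0: "P.indep_vars (\<lambda>_. borel) (\<lambda>i y. (\<lambda>z. a i * z (PW0 i j)) (restrict y {PW0 i j})) A"
    proof (rule indep_regroup[OF Mp ne])
      show "\<And>l. l \<in> A \<Longrightarrow> {PW0 l j} \<subseteq> J" using inJ j unfolding A_def by auto
      show "disjoint_family_on (\<lambda>i. {PW0 i j}) A" unfolding disjoint_family_on_def by auto
      fix l
      have "(\<lambda>z. z (PW0 l j)) \<in> borel_measurable (PiM {PW0 l j} M')" by (rule comp_borel[OF Ms]) simp
      then show "(\<lambda>z. a l * z (PW0 l j)) \<in> borel_measurable (PiM {PW0 l j} M')" by simp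
    qed
    have indZ: "P.indep_vars (\<lambda>_. borel) (\<lambda>i y. a i * y (PW0 i j)) A"
      using indZ0 by simp
    have DZ: "distributed (PiM J M') lborel (\<lambda>y. a i * y (PW0 i j)) (normal_density 0 (\<bar>a i\<bar> * \<sigma>0))"
      if i: "i \<in> A" for i
    proof -
      have iN: "i < N" "a i \<noteq> 0" using i unfolding A_def by auto
      have c: "distributed (PiM J M') lborel (\<lambda>y. y (PW0 i j)) (normal_density 0 \<sigma>0)"
        by (rule coord_distributed[OF Mp inJ[OF iN(1)]]) (use j iN in \<open>simp_all add: M'_def lawx_W0 gaussian_def \<sigma>0_def\<close>)
      have "distributed (PiM J M') lborel (\<lambda>y. 0 + a i * y (PW0 i j)) (normal_density (0 + a i * 0) (\<bar>a i\<bar> * \<sigma>0))"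
        by (rule P.normal_density_affine[OF c s0 iN(2)])
      then show ?thesis by simp
    qed
    have "distributed (PiM J M') lborel (\<lambda>y. \<Sum>i\<in>A. a i * y (PW0 i j))
        (normal_density (\<Sum>i\<in>A. 0) (sqrt (\<Sum>i\<in>A. (\<bar>a i\<bar> * \<sigma>0)\<^sup>2)))"
      by (rule P.sum_indep_normal[OF Afin Ane indZ _ DZ]) (use s0 A_def in auto)
    moreover have "(\<lambda>y. \<Sum>i\<in>A. a i * y (PW0 i j)) = (\<lambda>y. \<Sum>i<N. a i * y (PW0 i j))"
      by (rule ext, rule sumA) simp
    moreover have "sqrt (\<Sum>i\<in>A. (\<bar>a i\<bar> * \<sigma>0)\<^sup>2) = s"
    proof -
      have "(\<Sum>i\<in>A. (\<bar>a i\<bar> * \<sigma>0)\<^sup>2) = (\<Sum>i<N. (\<bar>a i\<bar> * \<sigma>0)\<^sup>2)" by (rule sumA) simp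
      also have "\<dots> = 2 / real N * (\<Sum>i<N. (a i)\<^sup>2)"
        unfolding \<sigma>0_def using N1 by (simp add: power_mult_distrib sum_distrib_left mult.commute)
      finally show ?thesis unfolding s_def by simp
    qed
    ultimately show ?thesis by simp
  qed
  have spos: "s > 0" unfolding s_def using apos N1 by simp
  have "P.prob {y \<in> space (PiM J M'). (\<Sum>j\<in>{..<d}. min (((\<Sum>i<N. a i * y (PW0 i j)) / s)\<^sup>2) 3) < real (card {..<d}) / 2}
     \<le> exp (- real (card {..<d}) / 72)"
    by (rule P.hoeff_gauss[OF _ _ ind spos D]) (use d1 in \<open>auto simp: lessThan_empty_iff\<close>)
  then show ?thesis by simp
qed

lemma coord_all:
  assumes "\<And>k. sets (M' k) = sets borel"
  shows "(\<lambda>z. z k) \<in> borel_measurable (PiM K M')"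
proof (cases "k \<in> K")
  case True
  then show ?thesis by (rule comp_borel[OF assms])
next
  case False
  have "(\<lambda>z. undefined) \<in> borel_measurable (PiM K M')" by simp
  moreover have "\<And>z. z \<in> space (PiM K M') \<Longrightarrow> undefined = z k"
    using False by (auto simp: space_PiM PiE_def extensional_def)
  ultimately show ?thesis by (rule measurable_cong[THEN iffD1, rotated])
qed

lemma Iq_bdd:
  "bdd_above ((\<lambda>p. \<bar>shallow_net d N W0 b0 W1 b1 (vec_of d (fst p)) - shallow_net d N W0 b0 W1 b1 (vec_of d (snd p))\<bar>
            / dist_d d (vec_of d (fst p)) (vec_of d (snd p))) ` Iq d)"
proof (rule bdd_above_mono[OF Lip_set_bdd[OF refl]])
  show "(\<lambda>p. \<bar>shallow_net d N W0 b0 W1 b1 (vec_of d (fst p)) - shallow_net d N W0 b0 W1 b1 (vec_of d (snd p))\<bar>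
            / dist_d d (vec_of d (fst p)) (vec_of d (snd p))) ` Iq d
    \<subseteq> {\<bar>shallow_net d N W0 b0 W1 b1 x - shallow_net d N W0 b0 W1 b1 y\<bar> / dist_d d x y | x y. x \<in> vecs d \<and> y \<in> vecs d \<and> x \<noteq> y}"
    unfolding Iq_def using vec_of_vecs by blast
qed

lemma Lip_measurable:
  assumes Ms: "\<And>k. sets (M' k) = sets borel" and d1: "d \<ge> 1"
  shows "(\<lambda>\<omega>. Lip d (rand_net d N \<omega>)) \<in> borel_measurable (PiM K M')"
proof -
  note [measurable] = coord_all[OF Ms]
  have eq: "Lip d (rand_net d N \<omega>) = (SUP p\<in>Iq d. \<bar>rand_net d N \<omega> (vec_of d (fst p)) - rand_net d N \<omega> (vec_of d (snd p))\<bar>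
            / dist_d d (vec_of d (fst p)) (vec_of d (snd p)))" for \<omega>
    unfolding rand_net_def by (rule Lip_SUP[OF d1])
  have "(\<lambda>\<omega>. SUP p\<in>Iq d. \<bar>rand_net d N \<omega> (vec_of d (fst p)) - rand_net d N \<omega> (vec_of d (snd p))\<bar>
            / dist_d d (vec_of d (fst p)) (vec_of d (snd p))) \<in> borel_measurable (PiM K M')"
  proof (rule borel_measurable_cSUP)
    show "countable (Iq d)" by (rule countableI_type)
    fix p
    show "(\<lambda>\<omega>. \<bar>rand_net d N \<omega> (vec_of d (fst p)) - rand_net d N \<omega> (vec_of d (snd p))\<bar>
            / dist_d d (vec_of d (fst p)) (vec_of d (snd p))) \<in> borel_measurable (PiM K M')"
      unfolding rand_net_def shallow_net_def relu_def by measurable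
  next
    fix \<omega>
    show "bdd_above ((\<lambda>p. \<bar>rand_net d N \<omega> (vec_of d (fst p)) - rand_net d N \<omega> (vec_of d (snd p))\<bar>
            / dist_d d (vec_of d (fst p)) (vec_of d (snd p))) ` Iq d)"
      unfolding rand_net_def by (rule Iq_bdd)
  qed
  then show ?thesis unfolding eq .
qed

lemma E_sub_L:
  assumes d1: "d \<ge> 1" and N1: "N \<ge> 1"
    and A: "real N / 2 \<le> (\<Sum>i<N. min ((\<omega> (PW1 i) / 1)\<^sup>2) 3)"
    and B: "real d / 2 \<le> (\<Sum>j<d. min (((\<Sum>i<N. \<omega> (PW1 i) * \<omega> (PW0 i j)) / sqrt (2 / real N * (\<Sum>i<N. (\<omega> (PW1 i))\<^sup>2)))\<^sup>2) 3)"
  shows "sqrt (real d) / (4 * sqrt 2) \<le> Lip d (rand_net d N \<omega>)"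
proof -
  define a where "a i = \<omega> (PW1 i)" for i
  define v where "v j = (\<Sum>i<N. \<omega> (PW1 i) * \<omega> (PW0 i j))" for j
  define s2 where "s2 = 2 / real N * (\<Sum>i<N. (a i)\<^sup>2)"
  have "(\<Sum>i<N. min ((a i / 1)\<^sup>2) 3) \<le> (\<Sum>i<N. (a i)\<^sup>2)" by (intro sum_mono) simp
  then have sa: "(\<Sum>i<N. (a i)\<^sup>2) \<ge> real N / 2" using A unfolding a_def by linarith
  have s2: "s2 \<ge> 1" unfolding s2_def using sa N1 by (simp add: field_simps)
  have sq: "(sqrt s2)\<^sup>2 = s2" using s2 by simp
  have "(\<Sum>j<d. min ((v j / sqrt s2)\<^sup>2) 3) \<le> (\<Sum>j<d. (v j)\<^sup>2 / s2)"
    by (intro sum_mono) (simp add: power_divide sq)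
  also have "\<dots> = (\<Sum>j<d. (v j)\<^sup>2) / s2" by (simp add: sum_divide_distrib)
  finally have "real d / 2 \<le> (\<Sum>j<d. (v j)\<^sup>2) / s2"
    using B unfolding v_def s2_def a_def by linarith
  then have "real d / 2 * s2 \<le> (\<Sum>j<d. (v j)\<^sup>2)" using s2 by (simp add: le_divide_eq)
  moreover have "real d / 2 \<le> real d / 2 * s2" using mult_left_mono[OF s2, of "real d / 2"] by simp
  ultimately have q: "(\<Sum>j<d. (\<Sum>i<N. \<omega> (PW1 i) * \<omega> (PW0 i j))\<^sup>2) \<ge> real d / 2"
    unfolding v_def by linarith
  show ?thesis unfolding rand_net_def by (rule lower_bound[OF d1 q])
qed

lemma core:
  assumes h: "hyps N D0 D1" and d1: "d \<ge> 1"
  shows "(1 - exp (- real N / 72)) * (1 - exp (- real d / 72)) \<le>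
    measure (net_space d N D0 D1) {\<omega> \<in> space (net_space d N D0 D1). sqrt (real d) / (4 * sqrt 2) \<le> Lip d (rand_net d N \<omega>)}"
proof -
  define M' where "M' = lawx d N D0 D1"
  define I1 where "I1 = PW1 ` {..<N}"
  define J where "J = params d N - PW1 ` {..<N}"
  have Mp: "\<And>k. prob_space (M' k)" unfolding M'_def by (rule lawx_prob[OF h])
  have Ms: "\<And>k. sets (M' k) = sets borel" unfolding M'_def by (rule lawx_sets[OF h])
  have N1: "N \<ge> 1" using h unfolding hyps_def by simp
  have PIJ: "params d N = I1 \<union> J" unfolding I1_def J_def by auto
  have disj: "I1 \<inter> J = {}" unfolding I1_def J_def by auto
  have finI1: "finite I1" unfolding I1_def by simp
  have finJ: "finite J" unfolding J_def using params_finite by simp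
  have NS: "net_space d N D0 D1 = PiM (I1 \<union> J) M'"
    unfolding net_space_eq M'_def PIJ ..
  interpret PS: product_sigma_finite M'
    by (rule product_sigma_finite.intro) (rule prob_space_imp_sigma_finite[OF Mp])
  interpret Q: prob_space "PiM (I1 \<union> J) M'" by (rule prob_space_PiM) (rule Mp)
  interpret P1: prob_space "PiM I1 M'" by (rule prob_space_PiM) (rule Mp)
  interpret PJ: prob_space "PiM J M'" by (rule prob_space_PiM) (rule Mp)
  note [measurable] = coord_all[OF Ms]
  define E where "E = {\<omega> \<in> space (PiM (I1 \<union> J) M').
     real N / 2 \<le> (\<Sum>i<N. min ((\<omega> (PW1 i) / 1)\<^sup>2) 3) \<and>
     real d / 2 \<le> (\<Sum>j<d. min (((\<Sum>i<N. \<omega> (PW1 i) * \<omega> (PW0 i j)) / sqrt (2 / real N * (\<Sum>i<N. (\<omega> (PW1 i))\<^sup>2)))\<^sup>2) 3)}"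
  have Emeas: "E \<in> sets (PiM (I1 \<union> J) M')" unfolding E_def by measurable
  define Aset where "Aset = {x \<in> space (PiM I1 M'). real N / 2 \<le> (\<Sum>i<N. min ((x (PW1 i) / 1)\<^sup>2) 3)}"
  have Ameas: "Aset \<in> sets (PiM I1 M')" unfolding Aset_def by measurable
  define ed where "ed = exp (- real d / 72)"
  define eN where "eN = exp (- real N / 72)"
  have ed1: "ed \<le> 1" unfolding ed_def by simp
  have eN1: "eN \<le> 1" unfolding eN_def by simp
  have Aprob: "ennreal (1 - eN) \<le> emeasure (PiM I1 M') Aset"
  proof -
    define C where "C = {x \<in> space (PiM I1 M'). (\<Sum>i<N. min ((x (PW1 i) / 1)\<^sup>2) 3) < real N / 2}"
    have Cm: "C \<in> sets (PiM I1 M')" unfolding C_def by measurable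
    have AC: "Aset = space (PiM I1 M') - C" unfolding Aset_def C_def by auto
    have "P1.prob C \<le> eN" unfolding C_def eN_def I1_def M'_def by (rule outer_bound[OF h])
    then have "1 - eN \<le> P1.prob Aset" unfolding AC P1.prob_compl[OF Cm] by simp
    then show ?thesis unfolding P1.emeasure_eq_measure by simp
  qed
  have sect: "ennreal (1 - ed) \<le> emeasure (PiM J M') ((\<lambda>y. merge I1 J (x, y)) -` E \<inter> space (PiM J M'))"
    if x: "x \<in> Aset" for x
  proof -
    define a where "a i = x (PW1 i)" for i
    have xs: "x \<in> space (PiM I1 M')" and xA: "real N / 2 \<le> (\<Sum>i<N. min ((a i / 1)\<^sup>2) 3)"
      using x unfolding Aset_def a_def by auto
    have "(\<Sum>i<N. min ((a i / 1)\<^sup>2) 3) \<le> (\<Sum>i<N. (a i)\<^sup>2)" by (intro sum_mono) simp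
    then have apos: "(\<Sum>i<N. (a i)\<^sup>2) > 0" using xA N1 by linarith
    define s where "s = sqrt (2 / real N * (\<Sum>i<N. (a i)\<^sup>2))"
    define B where "B = {y \<in> space (PiM J M'). real d / 2 \<le> (\<Sum>j<d. min (((\<Sum>i<N. a i * y (PW0 i j)) / s)\<^sup>2) 3)}"
    define C where "C = {y \<in> space (PiM J M'). (\<Sum>j<d. min (((\<Sum>i<N. a i * y (PW0 i j)) / s)\<^sup>2) 3) < real d / 2}"
    have Cm: "C \<in> sets (PiM J M')" unfolding C_def by measurable
    have BC: "B = space (PiM J M') - C" unfolding B_def C_def by auto
    have "PJ.prob C \<le> ed" unfolding C_def ed_def s_def J_def M'_def
      by (rule inner_prob_bound[OF h d1 apos])
    then have "1 - ed \<le> PJ.prob B" unfolding BC PJ.prob_compl[OF Cm] by simp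
    then have Bp: "ennreal (1 - ed) \<le> emeasure (PiM J M') B" unfolding PJ.emeasure_eq_measure by simp
    have "(\<lambda>y. merge I1 J (x, y)) -` E \<inter> space (PiM J M') = B"
    proof (intro set_eqI iffI)
      fix y assume "y \<in> (\<lambda>y. merge I1 J (x, y)) -` E \<inter> space (PiM J M')"
      then have ys: "y \<in> space (PiM J M')" and mE: "merge I1 J (x, y) \<in> E" by auto
      have m1: "merge I1 J (x, y) (PW1 i) = a i" if "i < N" for i
        using that disj unfolding a_def I1_def by simp
      have m0: "merge I1 J (x, y) (PW0 i j) = y (PW0 i j)" if "i < N" "j < d" for i j
      proof -
        have "PW0 i j \<notin> I1" "PW0 i j \<in> J" using that unfolding J_def I1_def by auto
        then show ?thesis unfolding merge_def by simp
      qed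
      have e1: "(\<Sum>i<N. (merge I1 J (x, y) (PW1 i))\<^sup>2) = (\<Sum>i<N. (a i)\<^sup>2)"
        by (rule sum.cong) (simp_all add: m1)
      have e2: "(\<Sum>i<N. merge I1 J (x, y) (PW1 i) * merge I1 J (x, y) (PW0 i j)) = (\<Sum>i<N. a i * y (PW0 i j))"
        if "j < d" for j
        by (rule sum.cong) (simp_all add: m1 m0 that)
      have "real d / 2 \<le> (\<Sum>j<d. min (((\<Sum>i<N. merge I1 J (x, y) (PW1 i) * merge I1 J (x, y) (PW0 i j)) / sqrt (2 / real N * (\<Sum>i<N. (merge I1 J (x, y) (PW1 i))\<^sup>2)))\<^sup>2) 3)"
        using mE unfolding E_def by blast
      also have "\<dots> = (\<Sum>j<d. min (((\<Sum>i<N. a i * y (PW0 i j)) / s)\<^sup>2) 3)"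
        unfolding e1 s_def by (rule sum.cong) (simp_all add: e2)
      finally show "y \<in> B" unfolding B_def using ys by blast
    next
      fix y assume "y \<in> B"
      then have ys: "y \<in> space (PiM J M')" and yB: "real d / 2 \<le> (\<Sum>j<d. min (((\<Sum>i<N. a i * y (PW0 i j)) / s)\<^sup>2) 3)"
        unfolding B_def by auto
      have m1: "merge I1 J (x, y) (PW1 i) = a i" if "i < N" for i
        using that disj unfolding a_def I1_def by simp
      have m0: "merge I1 J (x, y) (PW0 i j) = y (PW0 i j)" if "i < N" "j < d" for i j
      proof -
        have "PW0 i j \<notin> I1" "PW0 i j \<in> J" using that unfolding J_def I1_def by auto
        then show ?thesis unfolding merge_def by simp
      qed
      have e1: "(\<Sum>i<N. (merge I1 J (x, y) (PW1 i))\<^sup>2) = (\<Sum>i<N. (a i)\<^sup>2)"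
        by (rule sum.cong) (simp_all add: m1)
      have e2: "(\<Sum>i<N. merge I1 J (x, y) (PW1 i) * merge I1 J (x, y) (PW0 i j)) = (\<Sum>i<N. a i * y (PW0 i j))"
        if "j < d" for j
        by (rule sum.cong) (simp_all add: m1 m0 that)
      have e3: "(\<Sum>i<N. min ((merge I1 J (x, y) (PW1 i) / 1)\<^sup>2) 3) = (\<Sum>i<N. min ((a i / 1)\<^sup>2) 3)"
        by (rule sum.cong) (simp_all add: m1)
      have sp: "merge I1 J (x, y) \<in> space (PiM (I1 \<union> J) M')"
        using xs ys disj unfolding space_PiM by (auto simp: PiE_iff merge_def extensional_def)
      have c2: "real d / 2 \<le> (\<Sum>j<d. min (((\<Sum>i<N. merge I1 J (x, y) (PW1 i) * merge I1 J (x, y) (PW0 i j)) / sqrt (2 / real N * (\<Sum>i<N. (merge I1 J (x, y) (PW1 i))\<^sup>2)))\<^sup>2) 3)"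
      proof -
        have "(\<Sum>j<d. min (((\<Sum>i<N. merge I1 J (x, y) (PW1 i) * merge I1 J (x, y) (PW0 i j)) / sqrt (2 / real N * (\<Sum>i<N. (merge I1 J (x, y) (PW1 i))\<^sup>2)))\<^sup>2) 3)
          = (\<Sum>j<d. min (((\<Sum>i<N. a i * y (PW0 i j)) / s)\<^sup>2) 3)"
          unfolding e1 s_def by (rule sum.cong) (simp_all add: e2)
        then show ?thesis using yB by simp
      qed
      have c1: "real N / 2 \<le> (\<Sum>i<N. min ((merge I1 J (x, y) (PW1 i) / 1)\<^sup>2) 3)"
        unfolding e3 by (rule xA)
      have "merge I1 J (x, y) \<in> E" unfolding E_def using sp c1 c2 by blast
      then show "y \<in> (\<lambda>y. merge I1 J (x, y)) -` E \<inter> space (PiM J M')" using ys by blast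
    qed
    then show ?thesis using Bp by simp
  qed
  have "ennreal (1 - ed) * ennreal (1 - eN) \<le> ennreal (1 - ed) * emeasure (PiM I1 M') Aset"
    by (rule mult_left_mono[OF Aprob]) simp
  also have "\<dots> = (\<integral>\<^sup>+x. ennreal (1 - ed) * indicator Aset x \<partial>PiM I1 M')"
    by (rule nn_integral_cmult_indicator[OF Ameas, symmetric])
  also have "\<dots> \<le> (\<integral>\<^sup>+x. emeasure (PiM J M') ((\<lambda>y. merge I1 J (x, y)) -` E \<inter> space (PiM J M')) \<partial>PiM I1 M')"
  proof (rule nn_integral_mono)
    fix x assume "x \<in> space (PiM I1 M')"
    show "ennreal (1 - ed) * indicator Aset x \<le> emeasure (PiM J M') ((\<lambda>y. merge I1 J (x, y)) -` E \<inter> space (PiM J M'))"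
    proof (cases "x \<in> Aset")
      case True
      then show ?thesis using sect[OF True] by simp
    next
      case False
      then show ?thesis by simp
    qed
  qed
  also have "\<dots> = emeasure (PiM (I1 \<union> J) M') E"
    by (rule PS.emeasure_fold_integral[OF disj finI1 finJ Emeas, symmetric])
  also have "\<dots> = ennreal (Q.prob E)" by (rule Q.emeasure_eq_measure)
  finally have "ennreal (1 - ed) * ennreal (1 - eN) \<le> ennreal (Q.prob E)" .
  moreover have "ennreal (1 - ed) * ennreal (1 - eN) = ennreal ((1 - eN) * (1 - ed))"
    using ed1 eN1 by (simp add: ennreal_mult' mult.commute)
  ultimately have pE: "(1 - eN) * (1 - ed) \<le> Q.prob E" by simp
  define L where "L = {\<omega> \<in> space (PiM (I1 \<union> J) M'). sqrt (real d) / (4 * sqrt 2) \<le> Lip d (rand_net d N \<omega>)}"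
  have Lm: "L \<in> sets (PiM (I1 \<union> J) M')"
  proof -
    have [measurable]: "(\<lambda>\<omega>. Lip d (rand_net d N \<omega>)) \<in> borel_measurable (PiM (I1 \<union> J) M')"
      by (rule Lip_measurable[OF Ms d1])
    show ?thesis unfolding L_def by measurable
  qed
  have EL: "E \<subseteq> L"
  proof
    fix \<omega> assume "\<omega> \<in> E"
    then show "\<omega> \<in> L" unfolding E_def L_def using E_sub_L[OF d1 N1] by blast
  qed
  have "Q.prob E \<le> Q.prob L" by (rule Q.finite_measure_mono[OF EL Lm])
  with pE have "(1 - eN) * (1 - ed) \<le> Q.prob L" by linarith
  then show ?thesis unfolding NS L_def eN_def ed_def .
qed

lemma factor_bound:
  assumes n: "real n \<ge> 0"
  shows "max 0 (1 - 2 * exp (- (1/144) * real n)) \<le> 1 - exp (- real n / 72)"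
proof -
  have "exp (- real n / 72) \<le> exp (- (1/144) * real n)" using n by simp
  also have "\<dots> \<le> 2 * exp (- (1/144) * real n)" by simp
  finally have a: "exp (- real n / 72) \<le> 2 * exp (- (1/144) * real n)" .
  have b: "exp (- real n / 72) \<le> 1" using n by simp
  show ?thesis using a b by simp
qed

lemma quarter_bound:
  assumes "real n > ln 2 / (1/144)"
  shows "exp (- real n / 72) \<le> 1 / 4"
proof -
  have "2 * ln 2 < real n / 72" using assms by simp
  then have "exp (2 * ln 2) \<le> exp (real n / 72)" by simp
  moreover have "exp (2 * ln (2::real)) = 4"
  proof -
    have "exp (2 * ln (2::real)) = exp (ln 2 + ln 2)" by simp
    also have "\<dots> = exp (ln 2) * exp (ln (2::real))" by (rule exp_add)
    finally show ?thesis by simp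
  qed
  ultimately have "4 \<le> exp (real n / 72)" by simp
  then have "1 / exp (real n / 72) \<le> 1 / 4" by (intro divide_left_mono) simp_all
  then show ?thesis by (simp add: exp_minus inverse_eq_divide)
qed

theorem theorem3p2:
  shows "\<exists>c::real. \<exists>c1::real. c > 0 \<and> c1 > 0 \<and>
    (\<forall>(d::nat) (N::nat) (D0::nat \<Rightarrow> real measure) (D1::real measure).
       d \<ge> 1 \<longrightarrow> N \<ge> 1 \<longrightarrow>
       (\<forall>i<N. prob_space (D0 i) \<and> sets (D0 i) = sets borel) \<longrightarrow>
       prob_space D1 \<longrightarrow> sets D1 = sets borel \<longrightarrow>
       (measure (net_space d N D0 D1)
          {\<omega> \<in> space (net_space d N D0 D1).
             Lip d (rand_net d N \<omega>) \<ge> sqrt (real d) / (4 * sqrt 2)}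
         \<ge> max 0 (1 - 2 * exp (- c * real N)) * max 0 (1 - 2 * exp (- c * real d)))
       \<and> (real d > ln 2 / c \<and> real N > ln 2 / c \<longrightarrow>
            (\<integral>\<^sup>+ \<omega>. ennreal (Lip d (rand_net d N \<omega>)) \<partial>(net_space d N D0 D1))
              \<ge> ennreal (c1 * sqrt (real d))))"
proof (rule exI[of _ "1/144"], rule exI[of _ "9 / (64 * sqrt 2)"], intro conjI allI impI)
  show "(0::real) < 1 / 144" by simp
  show "(0::real) < 9 / (64 * sqrt 2)" by simp
  fix d N :: nat and D0 :: "nat \<Rightarrow> real measure" and D1 :: "real measure"
  assume d1: "d \<ge> 1" and N1: "N \<ge> 1" and D0: "\<forall>i<N. prob_space (D0 i) \<and> sets (D0 i) = sets borel"
    and D1: "prob_space D1" and D1s: "sets D1 = sets borel"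
  have h: "hyps N D0 D1" unfolding hyps_def using N1 D0 D1 D1s by blast
  define r where "r = sqrt (real d) / (4 * sqrt 2)"
  define L where "L = {\<omega> \<in> space (net_space d N D0 D1). r \<le> Lip d (rand_net d N \<omega>)}"
  have core': "(1 - exp (- real N / 72)) * (1 - exp (- real d / 72)) \<le> measure (net_space d N D0 D1) L"
    unfolding L_def r_def by (rule core[OF h d1])
  have fN: "max 0 (1 - 2 * exp (- (1/144) * real N)) \<le> 1 - exp (- real N / 72)" by (rule factor_bound) simp
  have fd: "max 0 (1 - 2 * exp (- (1/144) * real d)) \<le> 1 - exp (- real d / 72)" by (rule factor_bound) simp
  have "max 0 (1 - 2 * exp (- (1/144) * real N)) * max 0 (1 - 2 * exp (- (1/144) * real d))
     \<le> (1 - exp (- real N / 72)) * (1 - exp (- real d / 72))"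
    by (rule mult_mono[OF fN fd]) simp_all
  also note core'
  finally show "max 0 (1 - 2 * exp (- (1/144) * real N)) * max 0 (1 - 2 * exp (- (1/144) * real d))
     \<le> measure (net_space d N D0 D1)
        {\<omega> \<in> space (net_space d N D0 D1). sqrt (real d) / (4 * sqrt 2) \<le> Lip d (rand_net d N \<omega>)}"
    unfolding L_def r_def .
  assume big: "real d > ln 2 / (1/144) \<and> real N > ln 2 / (1/144)"
  have qd: "exp (- real d / 72) \<le> 1 / 4" using big by (intro quarter_bound) simp
  have qN: "exp (- real N / 72) \<le> 1 / 4" using big by (intro quarter_bound) simp
  have "(3/4) * (3/4) \<le> (1 - exp (- real N / 72)) * (1 - exp (- real d / 72))"
    using qd qN by (intro mult_mono) simp_all
  with core' have mL: "9 / 16 \<le> measure (net_space d N D0 D1) L" by simp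
  interpret NS: prob_space "net_space d N D0 D1"
    unfolding net_space_eq by (rule prob_space_PiM) (rule lawx_prob[OF h])
  have Lm: "L \<in> sets (net_space d N D0 D1)"
  proof -
    have [measurable]: "(\<lambda>\<omega>. Lip d (rand_net d N \<omega>)) \<in> borel_measurable (PiM (params d N) (lawx d N D0 D1))"
      by (rule Lip_measurable[OF lawx_sets[OF h] d1])
    have "{\<omega> \<in> space (PiM (params d N) (lawx d N D0 D1)). r \<le> Lip d (rand_net d N \<omega>)} \<in> sets (PiM (params d N) (lawx d N D0 D1))"
      by measurable
    then show ?thesis unfolding L_def net_space_eq .
  qed
  have r0: "r \<ge> 0" unfolding r_def by simp
  have "ennreal (9 / (64 * sqrt 2) * sqrt (real d)) = ennreal r * ennreal (9 / 16)"
    unfolding r_def by (simp add: ennreal_mult'[symmetric] field_simps)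
  also have "\<dots> \<le> ennreal r * ennreal (measure (net_space d N D0 D1) L)"
    using mL by (intro mult_left_mono) simp_all
  also have "\<dots> = ennreal r * emeasure (net_space d N D0 D1) L"
    by (simp add: NS.emeasure_eq_measure)
  also have "\<dots> = (\<integral>\<^sup>+\<omega>. ennreal r * indicator L \<omega> \<partial>net_space d N D0 D1)"
    by (rule nn_integral_cmult_indicator[OF Lm, symmetric])
  also have "\<dots> \<le> (\<integral>\<^sup>+\<omega>. ennreal (Lip d (rand_net d N \<omega>)) \<partial>net_space d N D0 D1)"
  proof (rule nn_integral_mono)
    fix \<omega> assume \<omega>: "\<omega> \<in> space (net_space d N D0 D1)"
    show "ennreal r * indicator L \<omega> \<le> ennreal (Lip d (rand_net d N \<omega>))"
    proof (cases "\<omega> \<in> L")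
      case True
      then have "r \<le> Lip d (rand_net d N \<omega>)" unfolding L_def by blast
      then show ?thesis using True by (simp add: ennreal_leI)
    next
      case False
      then show ?thesis by simp
    qed
  qed
  finally show "ennreal (9 / (64 * sqrt 2) * sqrt (real d)) \<le> (\<integral>\<^sup>+\<omega>. ennreal (Lip d (rand_net d N \<omega>)) \<partial>net_space d N D0 D1)" .
qed

end
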